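(* The finitary symmetric group $\mathrm{FS}(\mathbb{N})$ is a proper subgroup of the bi-immune symmetric group $G_{\mathfrak{B}}$.
   Context: $\mathbb{N}$ denotes the non-negative integers, and $\mathrm{Sym}(\mathbb{N})$ the group of all permutations of $\mathbb{N}$ under composition ($g \circ f$ means apply $f$ first). The support of $\sigma \in \mathrm{Sym}(\mathbb{N})$ is $\{n : \sigma(n) \neq n\}$; $\mathrm{FS}(\mathbb{N})$ is the group of permutations with finite support. For $i \in \mathbb{N}$, $\sigma_{(i)}$ is the permutation swapping $i$ and $i+1$ and fixing all other numbers. For $A \subseteq \mathbb{N}$ with increasing enumeration $a_0 < a_1 < \cdots$, define $\sigma_A(x) = \lim_{n \to \infty} (\sigma_{(a_0)} \circ \sigma_{(a_1)} \circ \cdots \circ \sigma_{(a_n)})(x)$ (eventually constant for each $x$). A set $A$ is immune if it is infinite and contains no infinite computably enumerable subset; $A$ is bi-immune if both $A$ and $\mathbb{N} - A$ are immune. For bi-immune $A$, $\sigma_A$ is a permutation of $\mathbb{N}$. The bi-immune symmetric group $G_{\mathfrak{B}}$ is the subgroup of $\mathrm{Sym}(\mathbb{N})$ generated by $\{\sigma_A : A \text{ bi-immune}\}$. *)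

theory Defs
  imports Main "HOL-Library.Infinite_Set"
begin

text \<open>Syntax of mu-recursive function terms (arity is not enforced; every term
denotes a partial function on argument lists, extra arguments being ignored
and missing projections returning 0). Restricted to one-argument inputs these
are exactly the partial recursive functions.\<close>

datatype recf =
    Z
  | S
  | Id nat
  | Cn recf "recf list"
  | Pr recf recf
  | Mn recf

inductive eval :: "recf \<Rightarrow> nat list \<Rightarrow> nat \<Rightarrow> bool" where
  eval_Z: "eval Z xs 0"
| eval_S: "eval S xs (Suc (hd xs))"
| eval_Id: "eval (Id k) xs (if k < length xs then xs ! k else 0)"
| eval_Cn: "list_all2 (\<lambda>g y. eval g xs y) gs ys \<Longrightarrow> eval f ys z \<Longrightarrow> eval (Cn f gs) xs z"
| eval_Pr0: "eval f xs z \<Longrightarrow> eval (Pr f g) (0 # xs) z"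
| eval_PrS: "eval (Pr f g) (n # xs) r \<Longrightarrow> eval g (n # r # xs) z \<Longrightarrow> eval (Pr f g) (Suc n # xs) z"
| eval_Mn: "eval f (y # xs) 0 \<Longrightarrow> (\<forall>y'<y. \<exists>z. z \<noteq> 0 \<and> eval f (y' # xs) z) \<Longrightarrow> eval (Mn f) xs y"
monos list_all2_mono

definition ce :: "nat set \<Rightarrow> bool" where
  "ce A \<longleftrightarrow> (\<exists>f. A = {x. \<exists>y. eval f [x] y})"

definition immune :: "nat set \<Rightarrow> bool" where
  "immune A \<longleftrightarrow> infinite A \<and> \<not> (\<exists>B. B \<subseteq> A \<and> infinite B \<and> ce B)"

definition bi_immune :: "nat set \<Rightarrow> bool" where
  "bi_immune A \<longleftrightarrow> immune A \<and> immune (UNIV - A)"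

definition adj_swap :: "nat \<Rightarrow> nat \<Rightarrow> nat" where
  "adj_swap i = (\<lambda>n. if n = i then Suc i else if n = Suc i then i else n)"

definition sigma_prefix :: "nat set \<Rightarrow> nat \<Rightarrow> nat \<Rightarrow> nat" where
  "sigma_prefix A n = foldr (\<circ>) (map (\<lambda>k. adj_swap (enumerate A k)) [0..<Suc n]) id"

definition sigma_set :: "nat set \<Rightarrow> nat \<Rightarrow> nat" where
  "sigma_set A x = (THE y. \<exists>N. \<forall>n\<ge>N. sigma_prefix A n x = y)"

definition FS :: "(nat \<Rightarrow> nat) set" where
  "FS = {f. bij f \<and> finite {n. f n \<noteq> n}}"

inductive_set gen_group :: "(nat \<Rightarrow> nat) set \<Rightarrow> (nat \<Rightarrow> nat) set" for X where
  gen_id: "id \<in> gen_group X"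
| gen_base: "f \<in> X \<Longrightarrow> f \<in> gen_group X"
| gen_comp: "f \<in> gen_group X \<Longrightarrow> g \<in> gen_group X \<Longrightarrow> f \<circ> g \<in> gen_group X"
| gen_inv: "f \<in> gen_group X \<Longrightarrow> inv f \<in> gen_group X"

definition G_B :: "(nat \<Rightarrow> nat) set" where
  "G_B = gen_group {sigma_set A | A. bi_immune A}"

end

theory Submission imports Defs "HOL-Combinatorics.Permutations" "HOL-Library.Countable" begin

definition sw :: "nat set \<Rightarrow> nat \<Rightarrow> nat" where
  "sw T x = (if x \<in> T then Suc x else if x \<noteq> 0 \<and> x - 1 \<in> T then x - 1 else x)"

definition sparse :: "nat set \<Rightarrow> bool" where
  "sparse T \<longleftrightarrow> (\<forall>a\<in>T. Suc a \<notin> T)"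

lemma enum_between:
  assumes "infinite T" "enumerate T n < s" "s < enumerate T (Suc n)"
  shows "s \<notin> T"
  using assms enumerate_Suc''[OF assms(1), of n] not_less_Least by metis

lemma enum_below0:
  assumes "s < enumerate T 0"
  shows "s \<notin> T"
proof
  assume "s \<in> T"
  have "enumerate T 0 = (LEAST n. n \<in> T)" by (rule enumerate_0)
  hence "enumerate T 0 \<le> s" using Least_le[of "\<lambda>n. n \<in> T" s] \<open>s \<in> T\<close> by simp
  thus False using assms by simp
qed

lemma foldr_snoc: "foldr (\<circ>) (xs @ [f]) id = foldr (\<circ>) xs id \<circ> (f::nat\<Rightarrow>nat)"
  by (induction xs) auto
lemma sigma_prefix_Suc: "sigma_prefix A (Suc n) = sigma_prefix A n \<circ> adj_swap (enumerate A (Suc n))"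
  unfolding sigma_prefix_def
  apply (subst upt_Suc_append[of 0 "Suc n"])
   apply simp
  apply (simp only: map_append list.map foldr_snoc)
  done
lemma sigma_prefix_0: "sigma_prefix A 0 = adj_swap (enumerate A 0)"
  unfolding sigma_prefix_def by simp

lemma prefix_sparse:
  assumes inf: "infinite T" and sp: "sparse T"
  shows "sigma_prefix T n x = (if x \<le> Suc (enumerate T n) then sw T x else x)"
proof (induction n arbitrary: x)
  case 0
  have "x < enumerate T 0 \<Longrightarrow> x \<notin> T" by (rule enum_below0)
  moreover have "x < Suc (enumerate T 0) \<Longrightarrow> x - 1 \<notin> T \<or> x = 0"
  proof (cases "x = 0")
    case False
    assume "x < Suc (enumerate T 0)"
    hence "x - 1 < enumerate T 0" using False by linarith
    thus ?thesis using enum_below0 by blast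
  qed simp
  moreover have "enumerate T 0 \<in> T" using enumerate_in_set[OF inf] .
  moreover have "Suc (enumerate T 0) \<notin> T" using calculation(3) sp sparse_def by blast
  ultimately show ?case
    by (auto simp: sigma_prefix_0 adj_swap_def sw_def)
next
  case (Suc n)
  let ?a = "enumerate T n" and ?b = "enumerate T (Suc n)"
  have ab: "?a < ?b" using enumerate_step[OF inf] .
  have aS: "?a \<in> T" "?b \<in> T" using enumerate_in_set[OF inf] by auto
  have "Suc ?a \<noteq> ?b" using aS sp sparse_def by metis
  hence ab2: "Suc ?a < ?b" using ab by linarith
  have nb: "Suc ?b \<notin> T" using aS sp sparse_def by metis
  have btw: "\<And>s. ?a < s \<Longrightarrow> s < ?b \<Longrightarrow> s \<notin> T" using enum_between[OF inf] by blast
  show ?case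
  proof (cases "x = ?b \<or> x = Suc ?b")
    case True
    then show ?thesis using Suc.IH ab2 aS nb
      by (auto simp: sigma_prefix_Suc adj_swap_def sw_def)
  next
    case False
    hence sx: "adj_swap ?b x = x" by (auto simp: adj_swap_def)
    show ?thesis
    proof (cases "x \<le> Suc ?a")
      case True then show ?thesis using Suc.IH sx ab2 by (simp add: sigma_prefix_Suc)
    next
      case F2: False
      show ?thesis
      proof (cases "x \<le> Suc ?b")
        case True
        hence "x < ?b" using False by auto
        hence "x \<notin> T" "x - 1 \<notin> T" using btw F2 by auto
        then show ?thesis using Suc.IH sx F2 True by (simp add: sigma_prefix_Suc sw_def)
      next
        case False then show ?thesis using Suc.IH sx F2 ab by (simp add: sigma_prefix_Suc)
      qed
    qed
  qed
qed

lemma sigma_set_sparse: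
  assumes inf: "infinite T" and sp: "sparse T"
  shows "sigma_set T = sw T"
proof
  fix x
  obtain N where N: "x \<le> Suc (enumerate T N)"
    using enumerate_mono_le_iff[OF inf] by (metis le_SucI le_enumerate[OF inf]) 
  have ev: "\<forall>n\<ge>N. sigma_prefix T n x = sw T x"
  proof (intro allI impI)
    fix n assume "N \<le> n"
    hence "enumerate T N \<le> enumerate T n" using inf by simp
    thus "sigma_prefix T n x = sw T x" using prefix_sparse[OF inf sp] N by simp
  qed
  show "sigma_set T x = sw T x"
    unfolding sigma_set_def
  proof (rule the_equality)
    show "\<exists>N. \<forall>n\<ge>N. sigma_prefix T n x = sw T x" using ev by blast
  next
    fix y assume "\<exists>N. \<forall>n\<ge>N. sigma_prefix T n x = y"
    then obtain M where "\<forall>n\<ge>M. sigma_prefix T n x = y" by blast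
    thus "y = sw T x" using ev[rule_format, of "max N M"] by simp
  qed
qed


instance recf :: countable
  by countable_datatype

definition dom_r :: "recf \<Rightarrow> nat set" where
  "dom_r f = {x. \<exists>y. eval f [x] y}"

definition CC :: "nat \<Rightarrow> nat set" where
  "CC j = (if infinite (dom_r (from_nat j)) then dom_r (from_nat j) else UNIV)"

definition pick :: "nat set \<Rightarrow> nat \<Rightarrow> nat" where
  "pick B m = (LEAST x. x \<in> B \<and> m < x)"

lemma CC_inf: "infinite (CC j)"
  by (simp add: CC_def)

lemma pick_prop:
  assumes "infinite B" shows "pick B m \<in> B \<and> m < pick B m"
proof -
  have "\<exists>x. x \<in> B \<and> m < x" using assms unfolding infinite_nat_iff_unbounded by blast
  thus ?thesis unfolding pick_def by (rule LeastI_ex)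
qed

primrec sq :: "nat \<Rightarrow> nat \<Rightarrow> nat" where
  "sq i 0 = pick (CC 0) (Suc i)"
| "sq i (Suc k) = pick (CC (Suc k div 2)) (Suc (sq i k))"

lemma sq_in: "sq i k \<in> CC (k div 2)"
  by (cases k) (simp_all add: pick_prop CC_inf)

lemma sq_step: "Suc (sq i k) < sq i (Suc k)"
  by (simp add: pick_prop CC_inf)

lemma sq_0: "Suc i < sq i 0"
  by (simp add: pick_prop CC_inf)

lemma sq_gap: "n < m \<Longrightarrow> Suc (sq i n) < sq i m"
proof (induction m)
  case 0 then show ?case by simp
next
  case (Suc m)
  show ?case
  proof (cases "n = m")
    case True then show ?thesis using sq_step by simp
  next
    case False
    hence "Suc (sq i n) < sq i m" using Suc by simp
    then show ?thesis using sq_step[of i m] by simp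
  qed
qed

lemma sq_gt: "Suc i < sq i k"
proof (cases k)
  case 0 then show ?thesis using sq_0 by simp
next
  case (Suc m)
  then show ?thesis using sq_gap[of 0 k i] sq_0[of i] by simp
qed

lemma sq_inj: "inj (sq i)"
proof (rule injI)
  fix a b assume "sq i a = sq i b"
  thus "a = b" using sq_gap[of a b i] sq_gap[of b a i] by (metis less_irrefl_nat linorder_neqE_nat less_SucI)
qed

definition AA :: "nat \<Rightarrow> nat set" where
  "AA i = sq i ` {k. even k}"

lemma bi_immune_crit:
  assumes "infinite X" "infinite (UNIV - X)"
    and "\<And>B. infinite B \<Longrightarrow> ce B \<Longrightarrow> B \<inter> X \<noteq> {} \<and> B - X \<noteq> {}"
  shows "bi_immune X"
  using assms unfolding bi_immune_def immune_def by blast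

lemma infinite_evens: "infinite {k::nat. even k}"
proof -
  have "{k::nat. even k} = (\<lambda>k. 2*k) ` UNIV" by (auto elim: evenE)
  moreover have "inj (\<lambda>k::nat. 2*k)" by (auto intro: injI)
  ultimately show ?thesis by (simp add: finite_image_iff)
qed

lemma infinite_odds: "infinite {k::nat. odd k}"
proof -
  have "{k::nat. odd k} = (\<lambda>k. 2*k+1) ` UNIV" by (auto elim: oddE)
  moreover have "inj (\<lambda>k::nat. 2*k+1)" by (auto intro: injI)
  ultimately show ?thesis by (simp add: finite_image_iff)
qed

lemma AA_gt: "a \<in> AA i \<Longrightarrow> Suc i < a"
  using sq_gt by (auto simp: AA_def)

lemma AA_sparse: "sparse (AA i)"
  unfolding sparse_def AA_def
proof safe
  fix p q assume "even p" "even q" "Suc (sq i p) = sq i q"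
  moreover have "\<not> q \<le> p" using calculation sq_gap[of q p i] by (metis le_neq_implies_less lessI less_irrefl_nat less_trans)
  moreover have "Suc p < q" using calculation by presburger
  ultimately show False using sq_gap[of "Suc p" q i] sq_step[of i p] by linarith
qed

lemma AA_inf: "infinite (AA i)"
  unfolding AA_def using infinite_evens sq_inj
  by (metis finite_imageD inj_on_subset subset_UNIV)

lemma odd_notin: "odd k \<Longrightarrow> sq i k \<notin> insert i (AA i)"
  using sq_gt[of i k] sq_inj[of i] by (auto simp: AA_def inj_eq)

lemma bi_AA_gen:
  assumes "X = AA i \<or> X = insert i (AA i)"
  shows "bi_immune X"
proof (rule bi_immune_crit)
  show "infinite X" using AA_inf assms by auto
  have "sq i ` {k. odd k} \<subseteq> UNIV - X" using odd_notin assms by blast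
  moreover have "infinite (sq i ` {k. odd k})"
    using infinite_odds sq_inj by (metis finite_imageD inj_on_subset subset_UNIV)
  ultimately show "infinite (UNIV - X)" using finite_subset by blast
next
  fix B assume B: "infinite B" "ce B"
  then obtain f where f: "B = dom_r f" unfolding ce_def dom_r_def by blast
  let ?j = "to_nat f"
  have C: "CC ?j = B" using B f by (simp add: CC_def)
  have "sq i (2 * ?j) \<in> B" using sq_in[of i "2 * ?j"] C by simp
  moreover have "sq i (2 * ?j) \<in> X" using assms by (auto simp: AA_def)
  moreover have "sq i (Suc (2 * ?j)) \<in> B" using sq_in[of i "Suc (2 * ?j)"] C by simp
  moreover have "sq i (Suc (2 * ?j)) \<notin> X" using odd_notin[of "Suc (2 * ?j)" i] assms by auto
  ultimately show "B \<inter> X \<noteq> {} \<and> B - X \<noteq> {}" by blast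
qed

lemma sw_in_G: "sw (AA i) \<in> G_B" "sw (insert i (AA i)) \<in> G_B"
proof -
  have sp2: "sparse (insert i (AA i))"
    using AA_sparse[of i] AA_gt[of _ i] unfolding sparse_def by force
  have "sigma_set (AA i) \<in> G_B" "sigma_set (insert i (AA i)) \<in> G_B"
    unfolding G_B_def using bi_AA_gen[of "AA i" i] bi_AA_gen[of "insert i (AA i)" i]
    by (auto intro!: gen_group.gen_base)
  thus "sw (AA i) \<in> G_B" "sw (insert i (AA i)) \<in> G_B"
    using sigma_set_sparse[OF AA_inf AA_sparse] sigma_set_sparse[of "insert i (AA i)"] AA_inf sp2
    by auto
qed

lemma adj_in_G: "adj_swap i \<in> G_B"
proof -
  let ?B = "AA i"
  have sp: "\<And>a. a \<in> ?B \<Longrightarrow> Suc a \<notin> ?B" using AA_sparse unfolding sparse_def by blast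
  have gt: "\<And>a. a \<in> ?B \<Longrightarrow> Suc i < a" using AA_gt by blast
  have "sw (insert i ?B) \<circ> sw ?B = adj_swap i"
  proof
    fix x
    show "(sw (insert i ?B) \<circ> sw ?B) x = adj_swap i x"
    proof (cases "x \<in> ?B")
      case True
      have g: "Suc i < x" using gt[OF True] .
      have s1: "sw ?B x = Suc x" using True by (simp add: sw_def)
      have n1: "Suc x \<notin> insert i ?B" using sp[OF True] g by simp
      have s2: "sw (insert i ?B) (Suc x) = x" using n1 True by (simp add: sw_def)
      have s3: "adj_swap i x = x" using g by (simp add: adj_swap_def)
      show ?thesis using s1 s2 s3 by simp
    next
      case F: False
      show ?thesis
      proof (cases "x \<noteq> 0 \<and> x - 1 \<in> ?B")
        case True
        have g: "Suc i < x - 1" using gt True by blast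
        have s1: "sw ?B x = x - 1" using True F by (simp add: sw_def)
        have s2: "sw (insert i ?B) (x - 1) = x" using True g by (simp add: sw_def)
        have "x \<noteq> i" "x \<noteq> Suc i" using g by linarith+
        hence s3: "adj_swap i x = x" by (simp add: adj_swap_def)
        show ?thesis using s1 s2 s3 by simp
      next
        case False
        have s1: "sw ?B x = x" using False F by (auto simp add: sw_def)
        have Si: "Suc i \<notin> ?B" using gt by blast
        show ?thesis
        proof (cases "x = i \<or> x = Suc i")
          case True
          thus ?thesis using s1 Si by (auto simp add: sw_def adj_swap_def)
        next
          case c: False
          have "x \<notin> insert i ?B" using c F by simp
          moreover have "\<not> (x \<noteq> 0 \<and> x - 1 \<in> insert i ?B)" using c False by auto
          ultimately have "sw (insert i ?B) x = x" by (auto simp add: sw_def)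
          moreover have "adj_swap i x = x" using c by (simp add: adj_swap_def)
          ultimately show ?thesis using s1 by simp
        qed
      qed
    qed
  qed
  moreover have "sw (insert i ?B) \<circ> sw ?B \<in> G_B"
    using sw_in_G[of i] unfolding G_B_def by (simp add: gen_group.gen_comp)
  ultimately show ?thesis by simp
qed

lemma transp_adj: "transpose i (Suc i) = adj_swap i"
  by (auto simp: transpose_def adj_swap_def)

lemma transp_in_G_aux: "transpose a (Suc (a + d)) \<in> G_B"
proof (induction d)
  case 0 then show ?case using adj_in_G transp_adj by simp
next
  case (Suc d)
  let ?b = "Suc (a + d)"
  have "transpose a (Suc ?b) = transpose ?b (Suc ?b) \<circ> transpose a ?b \<circ> transpose ?b (Suc ?b)"
    by (auto simp: transpose_def)
  moreover have "transpose ?b (Suc ?b) \<in> G_B" using adj_in_G transp_adj by simp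
  ultimately have "transpose a (Suc ?b) \<in> G_B" using Suc unfolding G_B_def by (simp add: gen_group.gen_comp)
  moreover have "Suc (a + Suc d) = Suc ?b" by simp
  ultimately show ?case by simp
qed

lemma transp_in_G: "transpose a b \<in> G_B"
proof -
  have lt: "transpose x y \<in> G_B" if "x < y" for x y
  proof -
    have "y = Suc (x + (y - x - 1))" using that by simp
    thus ?thesis using transp_in_G_aux[of x "y - x - 1"] by simp
  qed
  have idG: "id \<in> G_B" unfolding G_B_def by (rule gen_group.gen_id)
  show ?thesis
  proof (cases "a < b")
    case True then show ?thesis using lt by blast
  next
    case False
    show ?thesis
    proof (cases "a = b")
      case True then show ?thesis using idG by simp
    next
      case c: False
      hence "b < a" using False by linarith
      then show ?thesis using lt[of b a] transpose_commute[of a b] by simp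
    qed
  qed
qed

theorem lemma2p5:
  shows "FS \<subset> G_B"
proof
  show "FS \<subseteq> G_B"
  proof
    fix f assume "f \<in> FS"
    hence "permutation f" unfolding FS_def by (simp add: permutation)
    then obtain T where T: "finite T" "f permutes T" using permutation_permutes by blast
    from T(2,1) show "f \<in> G_B"
    proof (induction rule: permutes_induct)
      case id then show ?case unfolding G_B_def by (rule gen_group.gen_id)
    next
      case (swap a b p)
      have "transpose a b \<in> G_B" by (rule transp_in_G)
      with swap.IH show ?case unfolding G_B_def by (intro gen_group.gen_comp)
    qed
  qed
  show "FS \<noteq> G_B"
  proof
    assume "FS = G_B"
    hence "sw (AA 0) \<in> FS" using sw_in_G(1)[of 0] by simp
    hence "finite {n. sw (AA 0) n \<noteq> n}" unfolding FS_def by simp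
    moreover have "AA 0 \<subseteq> {n. sw (AA 0) n \<noteq> n}" unfolding sw_def by auto
    ultimately show False using AA_inf finite_subset by blast
  qed
qed

end
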